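(* For every $m\geq 2$, the Heisenberg Lie algebra $H(m)$ is not $2$-capable.
   Context: All Lie algebras are over a fixed field. The Heisenberg Lie algebra $H(m)$ is the Lie algebra of dimension $2m+1$ with $H(m)^2=Z(H(m))$ and $\dim H(m)^2=1$. A Lie algebra $L$ is $2$-capable if $L\cong H/Z_2(H)$ for some Lie algebra $H$, where $Z_2(H)$ is the second term of the upper central series of $H$. *)

theory Defs
  imports Main "HOL.Vector_Spaces"
begin

definition lie_algebra :: "('k::field \<Rightarrow> 'v::ab_group_add \<Rightarrow> 'v) \<Rightarrow> ('v \<Rightarrow> 'v \<Rightarrow> 'v) \<Rightarrow> bool" where
  "lie_algebra sc br \<longleftrightarrow>
     Vector_Spaces.vector_space sc \<and>
     (\<forall>x y z. br (x + y) z = br x z + br y z) \<and>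
     (\<forall>x y z. br x (y + z) = br x y + br x z) \<and>
     (\<forall>a x y. br (sc a x) y = sc a (br x y)) \<and>
     (\<forall>a x y. br x (sc a y) = sc a (br x y)) \<and>
     (\<forall>x. br x x = 0) \<and>
     (\<forall>x y z. br x (br y z) + br y (br z x) + br z (br x y) = 0)"

definition lie_center :: "('v \<Rightarrow> 'v \<Rightarrow> 'v::zero) \<Rightarrow> 'v set" where
  "lie_center br = {z. \<forall>x. br z x = 0}"

definition lie_center2 :: "('v \<Rightarrow> 'v \<Rightarrow> 'v::zero) \<Rightarrow> 'v set" where
  "lie_center2 br = {z. \<forall>x. br z x \<in> lie_center br}"

definition lie_derived :: "('k::field \<Rightarrow> 'v::ab_group_add \<Rightarrow> 'v) \<Rightarrow> ('v \<Rightarrow> 'v \<Rightarrow> 'v) \<Rightarrow> 'v set" where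
  "lie_derived sc br = module.span sc {br x y | x y. True}"

definition lie_hom :: "('k::field \<Rightarrow> 'h::ab_group_add \<Rightarrow> 'h) \<Rightarrow> ('h \<Rightarrow> 'h \<Rightarrow> 'h)
    \<Rightarrow> ('k \<Rightarrow> 'v::ab_group_add \<Rightarrow> 'v) \<Rightarrow> ('v \<Rightarrow> 'v \<Rightarrow> 'v) \<Rightarrow> ('h \<Rightarrow> 'v) \<Rightarrow> bool" where
  "lie_hom scH brH scL brL f \<longleftrightarrow>
     Vector_Spaces.linear scH scL f \<and> (\<forall>x y. f (brH x y) = brL (f x) (f y))"

text \<open>(H, f) witnesses that L is 2-capable: H is a Lie algebra and f : H \<rightarrow> L is a
  surjective Lie homomorphism with kernel Z_2(H), i.e. L \<cong> H/Z_2(H)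
  (first isomorphism theorem).  L is 2-capable iff such a witness exists
  for some Lie algebra H over the same field.\<close>
definition two_capable_witness :: "('k::field \<Rightarrow> 'h::ab_group_add \<Rightarrow> 'h) \<Rightarrow> ('h \<Rightarrow> 'h \<Rightarrow> 'h)
    \<Rightarrow> ('k \<Rightarrow> 'v::ab_group_add \<Rightarrow> 'v) \<Rightarrow> ('v \<Rightarrow> 'v \<Rightarrow> 'v) \<Rightarrow> ('h \<Rightarrow> 'v) \<Rightarrow> bool" where
  "two_capable_witness scH brH scL brL f \<longleftrightarrow>
     lie_algebra scH brH \<and> lie_hom scH brH scL brL f \<and> surj f \<and>
     {x. f x = 0} = lie_center2 brH"

end

theory Submission
  imports Defs
begin

lemma lie_add_l: "lie_algebra sc br \<Longrightarrow> br (x + y) w = br x w + br y w" by (simp add: lie_algebra_def)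
lemma lie_add_r: "lie_algebra sc br \<Longrightarrow> br w (x + y) = br w x + br w y" by (simp add: lie_algebra_def)
lemma lie_sc_l: "lie_algebra sc br \<Longrightarrow> br (sc a x) y = sc a (br x y)" by (simp add: lie_algebra_def)
lemma lie_sc_r: "lie_algebra sc br \<Longrightarrow> br x (sc a y) = sc a (br x y)" by (simp add: lie_algebra_def)
lemma lie_alt: "lie_algebra sc br \<Longrightarrow> br x x = 0" by (simp add: lie_algebra_def)
lemma lie_jac: "lie_algebra sc br \<Longrightarrow> br x (br y z) + br y (br z x) + br z (br x y) = 0" by (simp add: lie_algebra_def)
lemma lie_vs: "lie_algebra sc br \<Longrightarrow> Vector_Spaces.vector_space sc" by (simp add: lie_algebra_def)

lemma lie_zero_l: "lie_algebra sc br \<Longrightarrow> br 0 x = 0"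
  using lie_add_l[of sc br 0 0 x] by simp
lemma lie_zero_r: "lie_algebra sc br \<Longrightarrow> br x 0 = 0"
  using lie_add_r[of sc br x 0 0] by simp
lemma lie_neg_l: "lie_algebra sc br \<Longrightarrow> br (- x) y = - br x y"
  using lie_add_l[of sc br x "-x" y] lie_zero_l[of sc br y] by (simp add: eq_neg_iff_add_eq_0 add.commute)
lemma lie_neg_r: "lie_algebra sc br \<Longrightarrow> br y (- x) = - br y x"
  using lie_add_r[of sc br y x "-x"] lie_zero_r[of sc br y] by (simp add: eq_neg_iff_add_eq_0 add.commute)
lemma lie_diff_l: "lie_algebra sc br \<Longrightarrow> br (x - y) w = br x w - br y w"
  using lie_add_l[of sc br x "-y" w] lie_neg_l[of sc br y w] by simp
lemma lie_diff_r: "lie_algebra sc br \<Longrightarrow> br w (x - y) = br w x - br w y"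
  using lie_add_r[of sc br w x "-y"] lie_neg_r[of sc br w y] by simp
lemma lie_antisym: "lie_algebra sc br \<Longrightarrow> br x y = - br y x"
proof -
  assume A: "lie_algebra sc br"
  have "0 = br (x+y) (x+y)" using lie_alt[OF A] by simp
  also have "\<dots> = br x y + br y x" using lie_add_l[OF A, of x y "x+y"] lie_add_r[OF A] lie_alt[OF A] by simp
  finally show ?thesis by (simp add: eq_neg_iff_add_eq_0)
qed

lemma center_add: "lie_algebra sc br \<Longrightarrow> x \<in> lie_center br \<Longrightarrow> y \<in> lie_center br \<Longrightarrow> x + y \<in> lie_center br"
  by (simp add: lie_center_def lie_add_l)
lemma center_neg: "lie_algebra sc br \<Longrightarrow> x \<in> lie_center br \<Longrightarrow> - x \<in> lie_center br"
  by (simp add: lie_center_def lie_neg_l)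
lemma center_diff: "lie_algebra sc br \<Longrightarrow> x \<in> lie_center br \<Longrightarrow> y \<in> lie_center br \<Longrightarrow> x - y \<in> lie_center br"
  by (simp add: lie_center_def lie_diff_l)
lemma center_sc: "lie_algebra sc br \<Longrightarrow> x \<in> lie_center br \<Longrightarrow> sc a x \<in> lie_center br"
proof -
  assume A: "lie_algebra sc br" and x: "x \<in> lie_center br"
  interpret vector_space sc using lie_vs[OF A] .
  show ?thesis using x by (simp add: lie_center_def lie_sc_l[OF A])
qed

lemma jac_center:
  assumes A: "lie_algebra sc br" and "br y w \<in> lie_center2 br" and "br w x \<in> lie_center2 br"
  shows "br w (br x y) \<in> lie_center br"
proof -
  have 1: "br x (br y w) \<in> lie_center br"
    using assms(2) lie_antisym[OF A, of x "br y w"] center_neg[OF A] by (auto simp: lie_center2_def)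
  have 2: "br y (br w x) \<in> lie_center br"
    using assms(3) lie_antisym[OF A, of y "br w x"] center_neg[OF A] by (auto simp: lie_center2_def)
  have "br w (br x y) = - (br x (br y w) + br y (br w x))"
    using lie_jac[OF A, of x y w] by (simp add: add_eq_0_iff2 algebra_simps)
  thus ?thesis using 1 2 center_add[OF A] center_neg[OF A] by metis
qed

lemma proj:
  assumes A: "lie_algebra sc br" and z: "br a b = z" and "br v a = sc \<alpha> z" and "br v b = sc \<beta> z"
  shows "br (v - sc \<beta> a + sc \<alpha> b) a = 0 \<and> br (v - sc \<beta> a + sc \<alpha> b) b = 0"
proof -
  have ba: "br b a = - z" using lie_antisym[OF A, of b a] z by simp
  interpret vector_space sc using lie_vs[OF A] .
  show ?thesis using assms ba
    by (simp add: lie_add_l[OF A] lie_diff_l[OF A] lie_sc_l[OF A] lie_alt[OF A])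
qed


theorem corollary2p9:
  fixes scL :: "'k::field \<Rightarrow> 'v::ab_group_add \<Rightarrow> 'v"
    and brL :: "'v \<Rightarrow> 'v \<Rightarrow> 'v"
    and scH :: "'k \<Rightarrow> 'h::ab_group_add \<Rightarrow> 'h"
    and brH :: "'h \<Rightarrow> 'h \<Rightarrow> 'h"
    and f :: "'h \<Rightarrow> 'v"
    and m :: nat
  assumes "m \<ge> 2"
    and "lie_algebra scL brL"
    and "vector_space.dim scL (UNIV :: 'v set) = 2 * m + 1"
    and "lie_derived scL brL = lie_center brL"
    and "vector_space.dim scL (lie_derived scL brL) = 1"
  shows "\<not> two_capable_witness scH brH scL brL f"
proof
  assume W: "two_capable_witness scH brH scL brL f"
  have AL: "lie_algebra scL brL" by fact
  have AH: "lie_algebra scH brH" and hom: "lie_hom scH brH scL brL f" and sf: "surj f"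
    and ker: "{x. f x = 0} = lie_center2 brH"
    using W by (auto simp: two_capable_witness_def)
  interpret L: vector_space scL using lie_vs[OF AL] .
  interpret H: vector_space scH using lie_vs[OF AH] .
  have lin: "Vector_Spaces.linear scH scL f" and fbr: "\<And>x y. f (brH x y) = brL (f x) (f y)"
    using hom by (auto simp: lie_hom_def)
  interpret f: Vector_Spaces.linear scH scL f by (rule lin)
  have K: "\<And>h. h \<in> lie_center2 brH \<longleftrightarrow> f h = 0" using ker by blast
  define D where "D = lie_derived scL brL"
  have Dspan: "D = L.span {brL x y | x y. True}" by (simp add: D_def lie_derived_def)
  obtain B where B: "B \<subseteq> D" "L.independent B" "D \<subseteq> L.span B" "card B = L.dim D"
    using L.basis_exists by blast
  then obtain z0 where Bz: "B = {z0}" using assms(5) D_def by (metis card_1_singletonE)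
  have z0nz: "z0 \<noteq> 0" using B(2) Bz L.dependent_zero by blast
  have inD: "\<And>x. x \<in> D \<Longrightarrow> \<exists>k. x = scL k z0"
    using B(3) Bz L.span_singleton by auto
  have brD: "\<And>x y. brL x y \<in> D" unfolding Dspan by (rule L.span_base) blast
  obtain a b where ab: "brL a b \<noteq> 0"
  proof (rule ccontr)
    assume "\<not> thesis"
    with that have all0: "\<And>x y. brL x y = 0" by blast
    have "{brL x y | x y. True} \<subseteq> {0}" using all0 by auto
    hence "D \<subseteq> L.span {0}" unfolding Dspan by (rule L.span_mono)
    hence "z0 = 0" using B(1) Bz L.span_singleton by auto
    with z0nz show False by simp
  qed
  define z where "z = brL a b"
  obtain \<mu>0 where mu0: "z = scL \<mu>0 z0" using inD brD z_def by blast
  have mu0nz: "\<mu>0 \<noteq> 0" using mu0 ab z_def by auto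
  have mult: "\<And>x y. \<exists>k. brL x y = scL k z"
  proof -
    fix x y
    obtain l where l: "brL x y = scL l z0" using inD brD by blast
    have "scL (l / \<mu>0) z = scL l z0" using mu0 mu0nz by simp
    thus "\<exists>k. brL x y = scL k z" using l by metis
  qed
  have Dz: "\<And>x. x \<in> D \<Longrightarrow> x \<in> L.span {z}"
  proof -
    fix x assume "x \<in> D"
    then obtain l where l: "x = scL l z0" using inD by blast
    have "scL (l / \<mu>0) z = scL l z0" using mu0 mu0nz by simp
    thus "x \<in> L.span {z}" using l L.span_singleton by (metis rangeI)
  qed
  have projL: "\<And>v. \<exists>\<alpha> \<beta>. brL v a = scL \<alpha> z \<and> brL v b = scL \<beta> z \<and>
       brL (v - scL \<beta> a + scL \<alpha> b) a = 0 \<and> brL (v - scL \<beta> a + scL \<alpha> b) b = 0"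
  proof -
    fix v
    obtain \<alpha> where al: "brL v a = scL \<alpha> z" using mult by blast
    obtain \<beta> where be: "brL v b = scL \<beta> z" using mult by blast
    show "?thesis v" using proj[OF AL z_def[symmetric] al be] al be by blast
  qed
  obtain u where u: "brL u a = 0" "brL u b = 0" "u \<notin> lie_center brL"
  proof (rule ccontr)
    assume "\<not> thesis"
    with that have WC: "\<And>u. brL u a = 0 \<Longrightarrow> brL u b = 0 \<Longrightarrow> u \<in> lie_center brL" by blast
    have "UNIV \<subseteq> L.span {a, b, z}"
    proof
      fix v :: 'v
      obtain \<alpha> \<beta> where P: "brL (v - scL \<beta> a + scL \<alpha> b) a = 0" "brL (v - scL \<beta> a + scL \<alpha> b) b = 0"
        using projL by blast
      have "v - scL \<beta> a + scL \<alpha> b \<in> L.span {z}"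
        using WC[OF P] Dz assms(4) D_def by auto
      hence 1: "v - scL \<beta> a + scL \<alpha> b \<in> L.span {a, b, z}"
        using L.span_mono[of "{z}" "{a,b,z}"] by auto
      have 2: "scL \<beta> a - scL \<alpha> b \<in> L.span {a, b, z}"
        by (intro L.span_diff L.span_scale L.span_base) auto
      have "v = (v - scL \<beta> a + scL \<alpha> b) + (scL \<beta> a - scL \<alpha> b)" by simp
      thus "v \<in> L.span {a, b, z}" using L.span_add[OF 1 2] by simp
    qed
    hence "L.dim (UNIV :: 'v set) \<le> card {a, b, z}" by (intro L.dim_le_card) auto
    also have "\<dots> \<le> 3" by (simp add: card_insert_le_m1)
    finally show False using assms(1,3) by simp
  qed
  obtain v where v: "brL u v \<noteq> 0" using u(3) by (auto simp: lie_center_def)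
  obtain \<alpha> \<beta> where P: "brL (v - scL \<beta> a + scL \<alpha> b) a = 0" "brL (v - scL \<beta> a + scL \<alpha> b) b = 0"
    using projL by blast
  define v' where "v' = v - scL \<beta> a + scL \<alpha> b"
  have uv': "brL u v' = brL u v"
    unfolding v'_def using u by (simp add: lie_add_r[OF AL] lie_diff_r[OF AL] lie_sc_r[OF AL])
  obtain \<mu> where mu: "brL u v = scL \<mu> z" using mult by blast
  have munz: "\<mu> \<noteq> 0" using mu v by auto
  define c where "c = u"
  define d where "d = scL (1/\<mu>) v'"
  have cd: "brL c d = z" unfolding c_def d_def using uv' mu munz by (simp add: lie_sc_r[OF AL])
  have ac: "brL a c = 0" "brL b c = 0" "brL c a = 0" "brL c b = 0"
    using u lie_antisym[OF AL, of a u] lie_antisym[OF AL, of b u] by (auto simp: c_def)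
  have ad: "brL d a = 0" "brL d b = 0" "brL a d = 0" "brL b d = 0"
    using P lie_antisym[OF AL, of a d] lie_antisym[OF AL, of b d]
    by (auto simp: d_def v'_def lie_sc_l[OF AL])
  obtain x1 where x1: "f x1 = a" using sf by (metis surjD)
  obtain y1 where y1: "f y1 = b" using sf by (metis surjD)
  obtain x2 where x2: "f x2 = c" using sf by (metis surjD)
  obtain y2 where y2: "f y2 = d" using sf by (metis surjD)
  define p where "p = brH x1 y1"
  define e where "e = p - brH x2 y2"
  have fe: "f e = 0" unfolding e_def p_def using x1 y1 x2 y2 cd z_def by (simp add: f.diff fbr)
  have eZ2: "e \<in> lie_center2 brH" using fe K by blast
  have Z1e: "\<And>w. brH w e \<in> lie_center brH"
    using eZ2 lie_antisym[OF AH, of _ e] center_neg[OF AH] by (auto simp: lie_center2_def)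
  have pe: "p = brH x2 y2 + e" by (simp add: e_def)
  have stepA: "\<And>w. brL (f w) a = 0 \<Longrightarrow> brL (f w) b = 0 \<Longrightarrow> brH w p \<in> lie_center brH"
  proof -
    fix w assume h: "brL (f w) a = 0" "brL (f w) b = 0"
    have "brL b (f w) = 0" using h lie_antisym[OF AL, of b "f w"] by simp
    show "brH w p \<in> lie_center brH" unfolding p_def
      by (rule jac_center[OF AH]) (use h \<open>brL b (f w) = 0\<close> x1 y1 K fbr in auto)
  qed
  have stepB: "\<And>w. brL (f w) c = 0 \<Longrightarrow> brL d (f w) = 0
       \<Longrightarrow> brH w p \<in> lie_center brH"
  proof -
    fix w assume h: "brL (f w) c = 0" "brL d (f w) = 0"
    have "brH w (brH x2 y2) \<in> lie_center brH"
      by (rule jac_center[OF AH]) (use h x2 y2 K fbr in auto)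
    thus "brH w p \<in> lie_center brH" unfolding pe
      using Z1e center_add[OF AH] lie_add_r[OF AH] by metis
  qed
  have px1: "brH x1 p \<in> lie_center brH"
    by (rule stepB) (use x1 ac ad lie_alt[OF AL] in auto)
  have py1: "brH y1 p \<in> lie_center brH"
    by (rule stepB) (use y1 ac ad lie_alt[OF AL] in auto)
  have all: "\<And>w. brH w p \<in> lie_center brH"
  proof -
    fix w
    obtain \<alpha> \<beta> where P: "brL (f w - scL \<beta> a + scL \<alpha> b) a = 0" "brL (f w - scL \<beta> a + scL \<alpha> b) b = 0"
      using projL by blast
    define w' where "w' = w - scH \<beta> x1 + scH \<alpha> y1"
    have fw': "f w' = f w - scL \<beta> a + scL \<alpha> b"
      unfolding w'_def using x1 y1 by (simp add: f.add f.diff f.scale)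
    have 1: "brH w' p \<in> lie_center brH" using stepA P fw' by simp
    have "brH w p = brH w' p + scH \<beta> (brH x1 p) - scH \<alpha> (brH y1 p)"
      unfolding w'_def by (simp add: lie_add_l[OF AH] lie_diff_l[OF AH] lie_sc_l[OF AH])
    thus "brH w p \<in> lie_center brH"
      using 1 px1 py1 center_add[OF AH] center_diff[OF AH] center_sc[OF AH] by metis
  qed
  have "p \<in> lie_center2 brH"
    unfolding lie_center2_def
    using all lie_antisym[OF AH, of p] center_neg[OF AH] by auto
  hence "f p = 0" using K by blast
  hence "z = 0" unfolding p_def z_def using x1 y1 fbr by simp
  thus False using ab z_def by simp
qed

end
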